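(* Let $\kappa\in(0,1)$, $\gamma>0$, and let $S=((x_i,y_i))_{i=1}^n\subset\mathcal{X}\times\{\pm1\}$. Run the boosting procedure with measure rule LB-NxM$(\kappa,\gamma/4)$ (described in the context) and any real-valued weak learner with advantage $\gamma$, for $T\ge 16\log(1/\kappa)/\gamma^2$ rounds, and let $H=\frac1T\sum_{t=1}^T h_t:\mathcal{X}\to[-1,1]$ be the aggregated hypothesis. Then: (Good margin) $\Pr_{(x,y)\sim \mathcal{U}(S)}[yH(x)\le\gamma]\le\kappa$; (Smoothness) every distribution $\hat\mu_t$ supplied to the weak learner satisfies $\hat\mu_t(i)\le \frac{1}{\kappa n}$ for all $i\in[n]$.
   Context: Measures on $[n]$: $\mu:[n]\to[0,1]$, $|\mu|=\sum_i\mu(i)$, density $d(\mu)=|\mu|/n$, induced distribution $\hat\mu(i)=\mu(i)/|\mu|$; $\mathrm{KL}(\mu_1\|\mu_2)=\sum_i\mu_1(i)\log(\mu_1(i)/\mu_2(i))+\mu_2(i)-\mu_1(i)$; $\Gamma_\kappa=\{\mu:d(\mu)\ge\kappa\}$; $\Pi_{\Gamma_\kappa}\tilde\mu=\arg\min_{\mu\in\Gamma_\kappa}\mathrm{KL}(\mu\|\tilde\mu)$. A weak learner with advantage $\gamma$: given $S$ and a distribution $\hat\mu$ on $[n]$, outputs $h:\mathcal{X}\to[-1,1]$ with $\frac12\sum_{j}\hat\mu(j)|h(x_j)-y_j|\le\frac12-\gamma$. LB-NxM$(\kappa,\lambda)$ on input $S$ and hypotheses $h_1,\dots,h_{t}$: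 $\ell_j(i)=1-\frac12|h_j(x_i)-y_i|$, $\tilde\mu_{t+1}(i)=\kappa e^{-\lambda\sum_{j=1}^t\ell_j(i)}$, $\mu_{t+1}=\Pi_{\Gamma_\kappa}\tilde\mu_{t+1}$, return $\hat\mu_{t+1}$. Boosting procedure: starting from the empty list, in each round $t$ compute $\hat\mu_t=$ LB-NxM$(S,(h_1,\dots,h_{t-1}))$, call the weak learner on $(S,\hat\mu_t)$ to get $h_t$, and append it. $\mathcal U(S)$ is the uniform distribution over the $n$ examples. *)

theory Defs
  imports Complex_Main
begin

text \<open>Examples are indexed by 0,...,n-1. A measure on [n] is a function
  nat => real vanishing outside {..<n} with values in [0,1].\<close>

definition measures :: "nat \<Rightarrow> (nat \<Rightarrow> real) set" where
  "measures n = {\<mu>. (\<forall>i<n. 0 \<le> \<mu> i \<and> \<mu> i \<le> 1) \<and> (\<forall>i\<ge>n. \<mu> i = 0)}"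

definition msize :: "nat \<Rightarrow> (nat \<Rightarrow> real) \<Rightarrow> real" where
  "msize n \<mu> = (\<Sum>i<n. \<mu> i)"

definition density :: "nat \<Rightarrow> (nat \<Rightarrow> real) \<Rightarrow> real" where
  "density n \<mu> = msize n \<mu> / real n"

definition induced :: "nat \<Rightarrow> (nat \<Rightarrow> real) \<Rightarrow> nat \<Rightarrow> real" where
  "induced n \<mu> = (\<lambda>i. \<mu> i / msize n \<mu>)"

text \<open>Generalized KL divergence (with the convention 0 log 0 = 0, which holds
  automatically since the term is multiplied by mu1 i).\<close>
definition KL :: "nat \<Rightarrow> (nat \<Rightarrow> real) \<Rightarrow> (nat \<Rightarrow> real) \<Rightarrow> real" where
  "KL n \<mu>1 \<mu>2 = (\<Sum>i<n. \<mu>1 i * ln (\<mu>1 i / \<mu>2 i) + \<mu>2 i - \<mu>1 i)"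

definition Gamma :: "real \<Rightarrow> nat \<Rightarrow> (nat \<Rightarrow> real) set" where
  "Gamma \<kappa> n = {\<mu> \<in> measures n. density n \<mu> \<ge> \<kappa>}"

definition proj :: "real \<Rightarrow> nat \<Rightarrow> (nat \<Rightarrow> real) \<Rightarrow> nat \<Rightarrow> real" where
  "proj \<kappa> n \<mu>t = (SOME \<mu>. \<mu> \<in> Gamma \<kappa> n \<and> (\<forall>\<nu>\<in>Gamma \<kappa> n. KL n \<mu> \<mu>t \<le> KL n \<nu> \<mu>t))"

definition gain :: "('x \<Rightarrow> real) \<Rightarrow> (nat \<Rightarrow> 'x) \<Rightarrow> (nat \<Rightarrow> real) \<Rightarrow> nat \<Rightarrow> real" where
  "gain h X Y i = 1 - \<bar>h (X i) - Y i\<bar> / 2"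

definition lb_nxm :: "real \<Rightarrow> real \<Rightarrow> nat \<Rightarrow> (nat \<Rightarrow> 'x) \<Rightarrow> (nat \<Rightarrow> real)
    \<Rightarrow> (nat \<Rightarrow> 'x \<Rightarrow> real) \<Rightarrow> nat \<Rightarrow> nat \<Rightarrow> real" where
  "lb_nxm \<kappa> lam n X Y h t =
     (let \<mu>t = (\<lambda>i. if i < n then \<kappa> * exp (- lam * (\<Sum>j\<in>{1..<t}. gain (h j) X Y i)) else 0)
      in induced n (proj \<kappa> n \<mu>t))"

definition weak_hyp :: "real \<Rightarrow> nat \<Rightarrow> (nat \<Rightarrow> 'x) \<Rightarrow> (nat \<Rightarrow> real)
    \<Rightarrow> (nat \<Rightarrow> real) \<Rightarrow> ('x \<Rightarrow> real) \<Rightarrow> bool" where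
  "weak_hyp \<gamma> n X Y D h \<longleftrightarrow>
     (\<forall>z. -1 \<le> h z \<and> h z \<le> 1) \<and>
     (1/2) * (\<Sum>j<n. D j * \<bar>h (X j) - Y j\<bar>) \<le> 1/2 - \<gamma>"

end

theory Submission
  imports Defs
begin


lemma klt_nonneg:
  fixes a x :: real
  assumes "0 < a" "0 \<le> x"
  shows "0 \<le> x * ln (x / a) + a - x"
proof (cases "x = 0")
  case True then show ?thesis using assms by simp
next
  case False
  then have x: "0 < x" using assms by simp
  have "ln (a / x) \<le> a / x - 1" by (rule ln_le_minus_one) (use assms x in simp)
  then have "x * ln (a / x) \<le> x * (a / x - 1)" using x by (simp add: mult_left_mono)
  also have "\<dots> = a - x" using x by (simp add: field_simps)
  finally have "x * ln (a / x) \<le> a - x" .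
  moreover have "ln (x / a) = - ln (a / x)" using x assms by (simp add: ln_div)
  ultimately show ?thesis by simp
qed

lemma klt_zero:
  fixes a x :: real
  assumes "0 < a" "0 \<le> x" "x * ln (x / a) + a - x \<le> 0"
  shows "x = a"
proof (cases "x = 0")
  case True then show ?thesis using assms by simp
next
  case False
  then have x: "0 < x" using assms by simp
  have le: "ln (a / x) \<le> a / x - 1" by (rule ln_le_minus_one) (use assms x in simp)
  have eq: "ln (x / a) = - ln (a / x)" using x assms by (simp add: ln_div)
  have "ln (a / x) = a / x - 1"
  proof (rule ccontr)
    assume "ln (a / x) \<noteq> a / x - 1"
    then have "ln (a / x) < a / x - 1" using le by simp
    then have "x * ln (a / x) < x * (a / x - 1)" using x by simp
    also have "\<dots> = a - x" using x by (simp add: field_simps)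
    finally show False using assms(3) eq by simp
  qed
  then have "a / x = 1" by (intro ln_eq_minus_one) (use assms x in simp)
  then show ?thesis using x by (simp add: field_simps)
qed

lemma three_point:
  fixes a b x :: real
  assumes "0 < a" "0 < b" "0 \<le> x"
  shows "x * ln (x / a) + a - x
       = (x * ln (x / b) + b - x) + (b * ln (b / a) + a - b) + (x - b) * ln (b / a)"
proof (cases "x = 0")
  case True then show ?thesis by (simp add: algebra_simps)
next
  case False
  then have x: "0 < x" using assms by simp
  have "ln (x / a) = ln (x / b) + ln (b / a)" using x assms by (simp add: ln_div)
  then show ?thesis by (simp add: algebra_simps)
qed

lemma exp_neg_bound:
  fixes x :: real
  assumes "0 \<le> x"
  shows "x - x^2 / 2 \<le> 1 - exp (- x)"
proof -
  have e: "1 + x + x^2/2 \<le> exp x" by (rule exp_lower_Taylor_quadratic) (rule assms)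
  have p: "0 < 1 + x + x^2/2" using assms by (simp add: add_pos_nonneg)
  have "exp (- x) = 1 / exp x" by (simp add: exp_minus field_simps)
  also have "\<dots> \<le> 1 / (1 + x + x^2/2)" using e p by (simp add: frac_le)
  also have "\<dots> \<le> 1 - x + x^2/2"
  proof -
    have "(1 - x + x^2/2) * (1 + x + x^2/2) = 1 + x^4/4" by (simp add: algebra_simps power2_eq_square power4_eq_xxxx)
    also have "\<dots> \<ge> 1" by simp
    finally show ?thesis using p by (simp add: divide_le_eq)
  qed
  finally show ?thesis by simp
qed

lemma KL_nonneg:
  assumes "\<forall>i<n. 0 < a i" "\<forall>i<n. 0 \<le> v i"
  shows "0 \<le> KL n v a"
  unfolding KL_def
proof (intro sum_nonneg)
  fix i assume "i \<in> {..<n}"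
  then show "0 \<le> v i * ln (v i / a i) + a i - v i" using assms klt_nonneg[of "a i" "v i"] by simp
qed

lemma Gamma_D:
  assumes "m \<in> Gamma \<kappa> n" "0 < n"
  shows "\<forall>i<n. 0 \<le> m i \<and> m i \<le> 1" "\<forall>i\<ge>n. m i = 0" "\<kappa> * real n \<le> msize n m"
  using assms by (auto simp: Gamma_def measures_def density_def le_divide_eq)



lemma proj_exists:
  assumes k0: "0 < \<kappa>" and k1: "\<kappa> < 1" and n0: "0 < n" and apos: "\<forall>i<n. 0 < a i"
  shows "\<exists>m\<in>Gamma \<kappa> n. (\<forall>i<n. 0 < m i) \<and> (\<forall>v\<in>Gamma \<kappa> n. KL n m a + KL n v m \<le> KL n v a)"
proof -
  define f where "f c = (\<Sum>i<n. min 1 (c * a i))" for c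
  obtain c where c1: "1 \<le> c" and c2: "\<kappa> * real n \<le> f c" and c3: "c = 1 \<or> f c = \<kappa> * real n"
  proof (cases "\<kappa> * real n \<le> f 1")
    case True then show ?thesis using that by auto
  next
    case False
    define M where "M = 1 + (\<Sum>i<n. 1 / a i)"
    have Mge: "1 / a i \<le> M" if "i < n" for i
    proof -
      have "1 / a i \<le> (\<Sum>i<n. 1 / a i)"
        by (rule member_le_sum) (use that apos in auto)
      then show ?thesis unfolding M_def by simp
    qed
    have M1: "1 \<le> M" proof -
      have "0 \<le> (\<Sum>i<n. 1 / a i)" by (rule sum_nonneg) (use apos in \<open>simp add: less_imp_le\<close>)
      then show ?thesis unfolding M_def by simp
    qed
    have "f M = (\<Sum>i<n. 1)" unfolding f_def
    proof (rule sum.cong)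
      fix i assume i: "i \<in> {..<n}"
      then have "1 / a i \<le> M" using Mge by simp
      then have "1 \<le> M * a i" using apos i by (simp add: divide_le_eq mult.commute)
      then show "min 1 (M * a i) = 1" by simp
    qed simp
    then have fM: "\<kappa> * real n \<le> f M" using k1 n0 by simp
    have cont: "continuous_on {1..M} f" unfolding f_def by (intro continuous_intros)
    obtain x where "1 \<le> x" "x \<le> M" "f x = \<kappa> * real n"
      using IVT'[of f 1 "\<kappa> * real n" M, OF _ fM M1 cont] False by auto
    then show ?thesis using that by auto
  qed
  define m where "m i = (if i < n then min 1 (c * a i) else 0)" for i
  have mpos: "\<forall>i<n. 0 < m i" using apos c1 by (simp add: m_def)
  have msz: "msize n m = f c" unfolding msize_def f_def m_def by simp
  have mG: "m \<in> Gamma \<kappa> n"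
    unfolding Gamma_def measures_def density_def using mpos c2 msz n0
    by (auto simp: m_def le_divide_eq less_imp_le)
  have pyth: "KL n m a + KL n v m \<le> KL n v a" if vG: "v \<in> Gamma \<kappa> n" for v
  proof -
    note vD = Gamma_D[OF vG n0]
    have key: "KL n v a = KL n m a + KL n v m + (\<Sum>i<n. (v i - m i) * ln (m i / a i))"
      unfolding KL_def sum.distrib[symmetric]
    proof (rule sum.cong)
      fix i assume "i \<in> {..<n}"
      then have i: "i < n" by simp
      show "v i * ln (v i / a i) + a i - v i =
        m i * ln (m i / a i) + a i - m i + (v i * ln (v i / m i) + m i - v i) + (v i - m i) * ln (m i / a i)"
        using three_point[of "a i" "m i" "v i"] apos mpos vD i by simp
    qed simp
    have "(\<Sum>i<n. (v i - m i) * ln c) \<le> (\<Sum>i<n. (v i - m i) * ln (m i / a i))"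
    proof (rule sum_mono)
      fix i assume "i \<in> {..<n}"
      then have i: "i < n" by simp
      show "(v i - m i) * ln c \<le> (v i - m i) * ln (m i / a i)"
      proof (cases "c * a i \<le> 1")
        case True
        then have "m i = c * a i" using i by (simp add: m_def)
        moreover have "a i \<noteq> 0" using apos i by (metis less_irrefl)
        ultimately show ?thesis by simp
      next
        case False
        then have mi: "m i = 1" using i by (simp add: m_def)
        have "1 / a i < c" using False apos i by (simp add: divide_less_eq mult.commute)
        moreover have "0 < 1 / a i" using apos i by simp
        ultimately have "ln (1 / a i) \<le> ln c" by (simp only: ln_le_cancel_iff less_imp_le)
        moreover have "v i - 1 \<le> 0" using vD i by simp
        ultimately show ?thesis using mi by (simp add: mult_left_mono_neg)
      qed
    qed
    moreover have "(\<Sum>i<n. (v i - m i) * ln c) = ln c * (msize n v - msize n m)"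
      unfolding msize_def by (simp add: sum_distrib_left sum_subtractf algebra_simps sum_distrib_right)
    moreover have "0 \<le> ln c * (msize n v - msize n m)"
    proof (cases "c = 1")
      case True then show ?thesis by simp
    next
      case False
      then have "msize n m = \<kappa> * real n" using c3 msz by simp
      then show ?thesis using vD(3) c1 by simp
    qed
    ultimately show ?thesis using key by linarith
  qed
  show ?thesis using mG mpos pyth by blast
qed

lemma proj_props:
  assumes k0: "0 < \<kappa>" and k1: "\<kappa> < 1" and n0: "0 < n" and apos: "\<forall>i<n. 0 < a i"
  shows "proj \<kappa> n a \<in> Gamma \<kappa> n \<and> (\<forall>i<n. 0 < proj \<kappa> n a i)
     \<and> (\<forall>v\<in>Gamma \<kappa> n. KL n (proj \<kappa> n a) a + KL n v (proj \<kappa> n a) \<le> KL n v a)"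
proof -
  obtain m where mG: "m \<in> Gamma \<kappa> n" and mpos: "\<forall>i<n. 0 < m i"
    and pyth: "\<forall>v\<in>Gamma \<kappa> n. KL n m a + KL n v m \<le> KL n v a"
    using proj_exists[OF assms] by blast
  have "\<forall>v\<in>Gamma \<kappa> n. KL n m a \<le> KL n v a"
  proof
    fix v assume vG: "v \<in> Gamma \<kappa> n"
    have "0 \<le> KL n v m" using KL_nonneg[of n m v] mpos Gamma_D[OF vG n0] by simp
    then show "KL n m a \<le> KL n v a" using pyth vG by force
  qed
  then have "\<exists>\<mu>. \<mu> \<in> Gamma \<kappa> n \<and> (\<forall>v\<in>Gamma \<kappa> n. KL n \<mu> a \<le> KL n v a)" using mG by blast
  then have P: "proj \<kappa> n a \<in> Gamma \<kappa> n \<and> (\<forall>v\<in>Gamma \<kappa> n. KL n (proj \<kappa> n a) a \<le> KL n v a)"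
    unfolding proj_def by (rule someI_ex)
  define p where "p = proj \<kappa> n a"
  have pG: "p \<in> Gamma \<kappa> n" using P p_def by simp
  have "KL n m a + KL n p m \<le> KL n p a" using pyth pG by blast
  moreover have "KL n p a \<le> KL n m a" using P mG p_def by blast
  ultimately have le0: "KL n p m \<le> 0" by simp
  have pD: "\<forall>i<n. 0 \<le> p i \<and> p i \<le> 1" "\<forall>i\<ge>n. p i = 0" using Gamma_D[OF pG n0] by auto
  have mD: "\<forall>i\<ge>n. m i = 0" using Gamma_D[OF mG n0] by auto
  have nn: "\<forall>i\<in>{..<n}. 0 \<le> p i * ln (p i / m i) + m i - p i"
    using klt_nonneg mpos pD by simp
  have "KL n p m = 0" using le0 KL_nonneg[of n m p] mpos pD by simp
  then have "\<forall>i\<in>{..<n}. p i * ln (p i / m i) + m i - p i = 0"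
    unfolding KL_def using sum_nonneg_eq_0_iff[of "{..<n}" "\<lambda>i. p i * ln (p i / m i) + m i - p i"] nn by simp
  then have "\<forall>i<n. p i = m i" using klt_zero mpos pD by (metis lessThan_iff order_refl)
  then have "p = m" using pD mD by (metis ext not_less)
  then show ?thesis using mG mpos pyth p_def by simp
qed


lemma ln_div_exp:
  fixes x b y :: real
  assumes "0 < x" "0 < b"
  shows "ln (x / (b * exp (- y))) = ln (x / b) + y"
  using assms by (simp add: ln_div ln_mult)


theorem mainTheorem3:
  fixes \<kappa> \<gamma> :: real and n T :: nat and X :: "nat \<Rightarrow> 'x" and Y :: "nat \<Rightarrow> real"
    and h :: "nat \<Rightarrow> 'x \<Rightarrow> real"
  assumes "0 < \<kappa>" "\<kappa> < 1" "0 < \<gamma>" "0 < n"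
    and "\<forall>i<n. Y i = 1 \<or> Y i = -1"
    and "real T \<ge> 16 * ln (1 / \<kappa>) / \<gamma>^2"
    and "\<forall>t\<in>{1..T}. weak_hyp \<gamma> n X Y (lb_nxm \<kappa> (\<gamma>/4) n X Y h t) (h t)"
  shows "real (card {i. i < n \<and> Y i * ((1 / real T) * (\<Sum>t=1..T. h t (X i))) \<le> \<gamma>}) / real n \<le> \<kappa>
         \<and> (\<forall>t\<in>{1..T}. \<forall>i<n. lb_nxm \<kappa> (\<gamma>/4) n X Y h t i \<le> 1 / (\<kappa> * real n))"
proof -
  note k0 = assms(1) and k1 = assms(2) and g0 = assms(3) and n0 = assms(4)
    and Ypm = assms(5) and Tbig = assms(6) and WL = assms(7)
  define lam where "lam = \<gamma> / 4"
  define l where "l t i = gain (h t) X Y i" for t i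
  define a where "a t = (\<lambda>i. if i < n then \<kappa> * exp (- lam * (\<Sum>j\<in>{1..<t}. l j i)) else 0)" for t
  define mu where "mu t = proj \<kappa> n (a t)" for t
  define M where "M t = msize n (mu t)" for t
  have apos: "\<forall>i<n. 0 < a t i" for t using k0 by (simp add: a_def)
  have P: "mu t \<in> Gamma \<kappa> n \<and> (\<forall>i<n. 0 < mu t i)
     \<and> (\<forall>v\<in>Gamma \<kappa> n. KL n (mu t) (a t) + KL n v (mu t) \<le> KL n v (a t))" for t
    unfolding mu_def by (rule proj_props[OF k0 k1 n0 apos])
  have muD: "\<forall>i<n. 0 \<le> mu t i \<and> mu t i \<le> 1" "\<kappa> * real n \<le> M t" for t
    using Gamma_D[OF conjunct1[OF P] n0] M_def by auto
  have Mpos: "0 < M t" for t using muD(2)[of t] k0 n0 by (smt (verit) mult_pos_pos of_nat_0_less_iff)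
  have lb: "lb_nxm \<kappa> (\<gamma>/4) n X Y h t = induced n (mu t)" for t
    unfolding lb_nxm_def a_def mu_def lam_def l_def Let_def by simp
  have smooth: "\<forall>t\<in>{1..T}. \<forall>i<n. lb_nxm \<kappa> (\<gamma>/4) n X Y h t i \<le> 1 / (\<kappa> * real n)"
  proof (intro ballI allI impI)
    fix t i assume "i < n"
    then have "mu t i \<le> 1" "0 \<le> mu t i" using muD(1) by auto
    then have "mu t i / M t \<le> 1 / M t" using Mpos[of t] by (simp add: divide_right_mono)
    also have "\<dots> \<le> 1 / (\<kappa> * real n)" using muD(2)[of t] k0 n0 by (simp add: frac_le)
    finally show "lb_nxm \<kappa> (\<gamma>/4) n X Y h t i \<le> 1 / (\<kappa> * real n)"
      by (simp add: lb induced_def M_def)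
  qed

  have lfacts: "l t i = (1 + Y i * h t (X i)) / 2 \<and> 0 \<le> l t i \<and> l t i \<le> 1"
    if t: "t \<in> {1..T}" and i: "i < n" for t i
  proof -
    have hb: "-1 \<le> h t (X i)" "h t (X i) \<le> 1" using WL t unfolding weak_hyp_def by auto
    show ?thesis using Ypm i hb unfolding l_def gain_def by (auto simp: abs_if)
  qed
  have W: "(1/2 + \<gamma>) * M t \<le> (\<Sum>i<n. mu t i * l t i)" if t: "t \<in> {1..T}" for t
  proof -
    define d where "d j = \<bar>h t (X j) - Y j\<bar>" for j
    have "(1/2) * (\<Sum>j<n. induced n (mu t) j * d j) \<le> 1/2 - \<gamma>"
      using WL t unfolding weak_hyp_def lb d_def by auto
    moreover have "(\<Sum>j<n. induced n (mu t) j * d j) = (\<Sum>j<n. mu t j * d j) / M t"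
      unfolding induced_def M_def by (simp add: sum_divide_distrib)
    ultimately have "(1/2) * (\<Sum>j<n. mu t j * d j) \<le> (1/2 - \<gamma>) * M t"
      using Mpos[of t] by (simp add: divide_le_eq mult.commute right_diff_distrib mult.left_commute)
    moreover have "(\<Sum>i<n. mu t i * l t i) = M t - (1/2) * (\<Sum>j<n. mu t j * d j)"
      unfolding l_def gain_def d_def M_def msize_def
      by (simp add: algebra_simps sum_subtractf sum_distrib_left sum_divide_distrib)
    ultimately show ?thesis by (simp add: algebra_simps)
  qed
  define S where "S t = (\<Sum>i<n. mu t i * (1 - exp (- (lam * l t i))))" for t
  have Sb: "lam * (1/2 + \<gamma> - lam/2) * (\<kappa> * real n) \<le> S t" if t: "t \<in> {1..T}" for t
  proof -
    have "(\<Sum>i<n. lam * (mu t i * l t i) - lam^2/2 * mu t i) \<le> S t"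
      unfolding S_def
    proof (rule sum_mono)
      fix i assume "i \<in> {..<n}"
      then have i: "i < n" by simp
      have l01: "0 \<le> l t i" "l t i \<le> 1" using lfacts[OF t i] by auto
      have lam0: "0 < lam" using g0 lam_def by simp
      have x0: "0 \<le> lam * l t i" using l01 lam0 by simp
      have "(lam * l t i)^2 \<le> lam^2"
        using l01 lam0 by (simp add: power_mult_distrib mult_le_one power_le_one)
      then have "lam * l t i - lam^2/2 \<le> 1 - exp (- (lam * l t i))"
        using exp_neg_bound[OF x0] by simp
      then have "mu t i * (lam * l t i - lam^2/2) \<le> mu t i * (1 - exp (- (lam * l t i)))"
        using muD(1) i by (simp add: mult_left_mono)
      then show "lam * (mu t i * l t i) - lam^2/2 * mu t i \<le> mu t i * (1 - exp (- (lam * l t i)))"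
        by (simp add: algebra_simps)
    qed
    moreover have "(\<Sum>i<n. lam * (mu t i * l t i) - lam^2/2 * mu t i)
        = lam * (\<Sum>i<n. mu t i * l t i) - lam^2/2 * M t"
      unfolding M_def msize_def by (simp add: sum_subtractf sum_distrib_left)
    moreover have "lam * ((1/2 + \<gamma>) * M t) \<le> lam * (\<Sum>i<n. mu t i * l t i)"
      using W[OF t] g0 lam_def by (simp add: mult_left_mono)
    moreover have "lam * (1/2 + \<gamma> - lam/2) * (\<kappa> * real n) \<le> lam * (1/2 + \<gamma> - lam/2) * M t"
      using muD(2)[of t] g0 lam_def by (intro mult_left_mono) auto
    ultimately show ?thesis by (simp add: algebra_simps power2_eq_square)
  qed
  have astep: "a (Suc t) i = a t i * exp (- (lam * l t i))" if "1 \<le> t" "i < n" for t i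
  proof -
    have "(\<Sum>j\<in>{1..<Suc t}. l j i) = (\<Sum>j\<in>{1..<t}. l j i) + l t i"
      using that by simp
    then show ?thesis using that
      by (simp add: a_def algebra_simps exp_add[symmetric] exp_diff)
  qed
  define Phi where "Phi t = KL n (mu t) (a t)" for t
  define C where "C t = (\<Sum>i<n. a t i)" for t
  have step: "Phi t + S t + C (Suc t) - C t \<le> Phi (Suc t)" if t: "t \<in> {1..T}" for t
  proof -
    have py: "KL n (mu t) (a t) + KL n (mu (Suc t)) (mu t) \<le> KL n (mu (Suc t)) (a t)"
      using P[of t] P[of "Suc t"] by blast
    have "KL n (mu (Suc t)) (a (Suc t)) = (\<Sum>i<n. (mu (Suc t) i * ln (mu (Suc t) i / a t i) + a t i - mu (Suc t) i)
          + lam * l t i * mu (Suc t) i + (a (Suc t) i - a t i))"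
      unfolding KL_def
    proof (rule sum.cong)
      fix i assume "i \<in> {..<n}"
      then have i: "i < n" by simp
      have x: "0 < mu (Suc t) i" using P[of "Suc t"] i by blast
      have ai: "0 < a t i" using apos i by blast
      have "ln (mu (Suc t) i / a (Suc t) i) = ln (mu (Suc t) i / a t i) + lam * l t i"
        using astep[of t i] t i ln_div_exp[OF x ai] by simp
      then show "mu (Suc t) i * ln (mu (Suc t) i / a (Suc t) i) + a (Suc t) i - mu (Suc t) i =
          mu (Suc t) i * ln (mu (Suc t) i / a t i) + a t i - mu (Suc t) i + lam * l t i * mu (Suc t) i + (a (Suc t) i - a t i)"
        by (simp add: algebra_simps)
    qed simp
    also have "\<dots> = KL n (mu (Suc t)) (a t) + (\<Sum>i<n. lam * l t i * mu (Suc t) i) + (C (Suc t) - C t)"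
      unfolding KL_def C_def by (simp add: sum.distrib sum_subtractf)
    finally have eq: "Phi (Suc t) = KL n (mu (Suc t)) (a t) + (\<Sum>i<n. lam * l t i * mu (Suc t) i) + (C (Suc t) - C t)"
      unfolding Phi_def .
    have "S t \<le> (\<Sum>i<n. (mu (Suc t) i * ln (mu (Suc t) i / mu t i) + mu t i - mu (Suc t) i) + lam * l t i * mu (Suc t) i)"
      unfolding S_def
    proof (rule sum_mono)
      fix i assume "i \<in> {..<n}"
      then have i: "i < n" by simp
      have x: "0 < mu (Suc t) i" using P[of "Suc t"] i by blast
      have b: "0 < mu t i" using P[of t] i by blast
      have "0 \<le> mu (Suc t) i * ln (mu (Suc t) i / (mu t i * exp (- (lam * l t i)))) + mu t i * exp (- (lam * l t i)) - mu (Suc t) i"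
        using klt_nonneg[of "mu t i * exp (- (lam * l t i))" "mu (Suc t) i"] x b by simp
      moreover have "ln (mu (Suc t) i / (mu t i * exp (- (lam * l t i)))) = ln (mu (Suc t) i / mu t i) + lam * l t i"
        using ln_div_exp[OF x b] by simp
      ultimately show "mu t i * (1 - exp (- (lam * l t i))) \<le> mu (Suc t) i * ln (mu (Suc t) i / mu t i) + mu t i - mu (Suc t) i + lam * l t i * mu (Suc t) i"
        by (simp add: algebra_simps)
    qed
    also have "\<dots> = KL n (mu (Suc t)) (mu t) + (\<Sum>i<n. lam * l t i * mu (Suc t) i)"
      unfolding KL_def by (simp add: sum.distrib)
    finally show ?thesis using eq py unfolding Phi_def by linarith
  qed
  have tele: "Phi 1 + (\<Sum>t=1..k. S t) + C (Suc k) - C 1 \<le> Phi (Suc k)" if "k \<le> T" for k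
    using that
  proof (induction k)
    case 0 then show ?case by simp
  next
    case (Suc k)
    then have "Phi 1 + (\<Sum>t=1..k. S t) + C (Suc k) - C 1 \<le> Phi (Suc k)" by simp
    moreover have "Phi (Suc k) + S (Suc k) + C (Suc (Suc k)) - C (Suc k) \<le> Phi (Suc (Suc k))"
      using step[of "Suc k"] Suc.prems by simp
    ultimately show ?case by simp
  qed

  define E where "E = {i. i < n \<and> Y i * ((1 / real T) * (\<Sum>t=1..T. h t (X i))) \<le> \<gamma>}"
  have lnk: "0 < ln (1 / \<kappa>)" using k0 k1 by simp
  have T0: "0 < real T"
  proof -
    have "0 < 16 * ln (1 / \<kappa>) / \<gamma>^2" using lnk g0 by simp
    then show ?thesis using Tbig by linarith
  qed
  have Tg: "16 * ln (1 / \<kappa>) \<le> real T * \<gamma>^2" using Tbig g0 by (simp add: divide_le_eq)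
  have margin: "real (card E) / real n \<le> \<kappa>"
  proof (rule ccontr)
    assume "\<not> real (card E) / real n \<le> \<kappa>"
    then have Ebig: "\<kappa> * real n < real (card E)" using n0 by (simp add: divide_le_eq mult.commute)
    have Esub: "E \<subseteq> {..<n}" unfolding E_def by auto
    have finE: "finite E" using Esub finite_subset by blast
    have cE0: "0 < real (card E)" using Ebig k0 n0 by (smt (verit) mult_pos_pos of_nat_0_less_iff)
    define c where "c = \<kappa> * real n / real (card E)"
    have c0: "0 < c" unfolding c_def using k0 n0 cE0 by simp
    have c1: "c < 1" unfolding c_def using Ebig cE0 by simp
    have cE: "real (card E) * c = \<kappa> * real n" unfolding c_def using cE0 by simp
    define v where "v i = (if i \<in> E then c else 0)" for i
    have sumE: "(\<Sum>i<n. if i \<in> E then f i else 0) = (\<Sum>i\<in>E. f i)" for f :: "nat \<Rightarrow> real"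
    proof -
      have "{x \<in> {..<n}. x \<in> E} = E" using Esub by auto
      then show ?thesis using sum.inter_filter[of "{..<n}" f "\<lambda>x. x \<in> E"] by simp
    qed
    have msv: "msize n v = \<kappa> * real n"
      unfolding msize_def v_def using sumE[of "\<lambda>_. c"] cE by (simp add: mult.commute)
    have vG: "v \<in> Gamma \<kappa> n"
      unfolding Gamma_def measures_def density_def using msv c0 c1 Esub n0
      by (auto simp: v_def)
    have up1: "Phi (Suc T) \<le> KL n v (a (Suc T))"
    proof -
      have "0 \<le> KL n v (mu (Suc T))"
        using KL_nonneg[of n "mu (Suc T)" v] P[of "Suc T"] c0 by (auto simp: v_def)
      then show ?thesis using P[of "Suc T"] vG unfolding Phi_def by force
    qed
    have Lb: "lam * (\<Sum>j\<in>{1..<Suc T}. l j i) \<le> lam * (real T * (1 + \<gamma>) / 2)" if i: "i \<in> E" for i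
    proof -
      have iN: "i < n" using i Esub by auto
      have "(\<Sum>j\<in>{1..<Suc T}. l j i) = (\<Sum>t=1..T. (1 + Y i * h t (X i)) / 2)"
        unfolding atLeastLessThanSuc_atLeastAtMost
        by (rule sum.cong) (use lfacts iN in auto)
      also have "\<dots> = (real T + Y i * (\<Sum>t=1..T. h t (X i))) / 2"
        by (simp add: sum_divide_distrib[symmetric] sum.distrib sum_distrib_left)
      also have "\<dots> \<le> (real T + real T * \<gamma>) / 2"
      proof -
        have "Y i * ((1 / real T) * (\<Sum>t=1..T. h t (X i))) \<le> \<gamma>" using i unfolding E_def by simp
        then have "(Y i * (\<Sum>t=1..T. h t (X i))) / real T \<le> \<gamma>" by simp
        then have "Y i * (\<Sum>t=1..T. h t (X i)) \<le> \<gamma> * real T" using T0 by (simp add: divide_le_eq)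
        then show ?thesis by (simp add: mult.commute)
      qed
      finally have "(\<Sum>j\<in>{1..<Suc T}. l j i) \<le> real T * (1 + \<gamma>) / 2" by (simp add: algebra_simps)
      moreover have "0 \<le> lam" using g0 lam_def by simp
      ultimately show ?thesis by (rule mult_left_mono)
    qed
    have up2: "KL n v (a (Suc T)) \<le> \<kappa> * real n * (ln (c / \<kappa>) + lam * (real T * (1 + \<gamma>) / 2) - 1) + C (Suc T)"
    proof -
      have "KL n v (a (Suc T)) = (\<Sum>i<n. v i * ln (v i / a (Suc T) i) - v i) + C (Suc T)"
        unfolding KL_def C_def by (simp add: sum.distrib sum_subtractf algebra_simps)
      also have "(\<Sum>i<n. v i * ln (v i / a (Suc T) i) - v i)
          = (\<Sum>i<n. if i \<in> E then c * ln (c / a (Suc T) i) - c else 0)"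
        by (rule sum.cong) (auto simp: v_def)
      also have "\<dots> = (\<Sum>i\<in>E. c * ln (c / a (Suc T) i) - c)" by (rule sumE)
      also have "\<dots> \<le> (\<Sum>i\<in>E. c * (ln (c / \<kappa>) + lam * (real T * (1 + \<gamma>) / 2)) - c)"
      proof (rule sum_mono)
        fix i assume i: "i \<in> E"
        have iN: "i < n" using i Esub by auto
        have "ln (c / a (Suc T) i) = ln (c / \<kappa>) + lam * (\<Sum>j\<in>{1..<Suc T}. l j i)"
          using ln_div_exp[OF c0 k0, of "lam * (\<Sum>j\<in>{1..<Suc T}. l j i)"] iN
          by (simp add: a_def)
        then show "c * ln (c / a (Suc T) i) - c \<le> c * (ln (c / \<kappa>) + lam * (real T * (1 + \<gamma>) / 2)) - c"
          using Lb[OF i] c0 by (simp add: mult_left_mono)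
      qed
      also have "\<dots> = real (card E) * c * (ln (c / \<kappa>) + lam * (real T * (1 + \<gamma>) / 2) - 1)"
        by (simp add: algebra_simps)
      finally show ?thesis using cE by simp
    qed
    have C1: "C 1 = \<kappa> * real n" unfolding C_def a_def by simp
    have Phi1: "0 \<le> Phi 1" unfolding Phi_def using KL_nonneg[of n "a 1" "mu 1"] apos muD(1) by auto
    have sumS: "real T * (lam * (1/2 + \<gamma> - lam/2) * (\<kappa> * real n)) \<le> (\<Sum>t=1..T. S t)"
      using sum_mono[of "{1..T}" "\<lambda>_. lam * (1/2 + \<gamma> - lam/2) * (\<kappa> * real n)" S] Sb by simp
    have "real T * (lam * (1/2 + \<gamma> - lam/2) * (\<kappa> * real n))
        \<le> \<kappa> * real n * (ln (c / \<kappa>) + lam * (real T * (1 + \<gamma>) / 2))"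
      using tele[of T] up1 up2 C1 Phi1 sumS by (simp add: algebra_simps)
    then have "(\<kappa> * real n) * (real T * (lam * (1/2 + \<gamma> - lam/2)))
        \<le> (\<kappa> * real n) * (ln (c / \<kappa>) + lam * (real T * (1 + \<gamma>) / 2))"
      by (simp add: algebra_simps)
    then have "real T * (lam * (1/2 + \<gamma> - lam/2)) \<le> ln (c / \<kappa>) + lam * (real T * (1 + \<gamma>) / 2)"
      using k0 n0 by (simp add: mult_le_cancel_left_pos)
    note this_ih = this
    have A: "3 * (real T * \<gamma>^2) / 32 \<le> ln (c / \<kappa>)"
    proof -
      have "real T * (lam * (1/2 + \<gamma> - lam/2)) - lam * (real T * (1 + \<gamma>) / 2) = 3 * (real T * \<gamma>^2) / 32"
        unfolding lam_def power2_eq_square by (simp add: field_simps)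
      then show "3 * (real T * \<gamma>^2) / 32 \<le> ln (c / \<kappa>)" using this_ih by linarith
    qed
    have "c / \<kappa> < 1 / \<kappa>" using c1 k0 by (simp add: divide_strict_right_mono)
    then have B: "ln (c / \<kappa>) < ln (1 / \<kappa>)" using c0 k0 by simp
    show False using A B Tg lnk by linarith
  qed
  show ?thesis using margin smooth unfolding E_def by simp
qed

end
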